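(* Let $\mathscr{C}$ be a hereditary graph class closed under disjoint union, let $\Pi$ be a $\rho$-local minimization problem which is cuttable for $\mathscr{C}$ with parameter $\beta>0$, and let $\varepsilon>0$. Then for every integer $r\ge0$ and real $\alpha>0$, every deterministic LOCAL algorithm $\mathsf{A}$ (in the LOCAL model with polynomially bounded identifiers) with round complexity $r$ that is an $\alpha$-approximation for $\Pi$ on $\mathscr{C}$ is an $\varepsilon$-weakly $(r+1)$-uniform $\alpha\beta$-approximation for $\Pi$ on $\mathscr{C}$.
   Context: Hereditary: closed under vertex deletion. $N^t[S]$ is the set of vertices at distance at most $t$ from $S$. Deterministic LOCAL model: vertices have distinct positive integer identifiers bounded by a polynomial in $n=|V(G)|$, and guarantees are required to hold for every fixed polynomial bound; synchronous rounds of unbounded message exchange with neighbours and unbounded local computation; with round complexity $r$ the output of $v$ depends only on vertices at distance at most $r$ from $v$, their identifiers, and incident edges. $\mathsf{A}(G)$ is the output set. Problems: $\Pi$ (feasible solutions are vertex subsets) is $\rho$-local if there is a LOCAL verifier with round complexity $\rho$ which accepts at every vertex iff the given $S\subseteq V(G)$ is feasible; $S$ is feasible on $X$ if the verifier accepts at every vertex of $X$; $\mathrm{OPT}_\Pi(G,X)$ is the minimum size of a set feasible on $X$; $\mathrm{OPT}_\Pi(G)=\mathrm{OPT}_\Pi(G,V(G))$. $\Pi$ is cuttable for $\mathscr{C}$ with parameter $\beta$ if for all $G\in\mathscr{C}$ and $X\subseteq V(G)$ there is $Y$ with $X\subseteq Y\subseteq V(G)$ and $\mathrm{OPT}_\Pi(G[Y])\le\beta\,\mathrm{OPT}_\Pi(G,X)$.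 $\mathsf{A}$ is an $\alpha$-approximation on $\mathscr{C}$ if on each $G\in\mathscr{C}$ it outputs a feasible solution of size at most $\alpha\,\mathrm{OPT}_\Pi(G)$; it is an $\varepsilon$-weakly $k$-uniform $\gamma$-approximation if it outputs feasible solutions and $|\mathsf{A}(G)\cap S|\le\gamma\,\mathrm{OPT}_\Pi(G,N^k[S])$ for all $G\in\mathscr{C}$ and all $S\subseteq V(G)$ with $|S|\ge\lfloor\varepsilon|V(G)|\rfloor$. *)

theory Defs
  imports "HOL-Computational_Algebra.Polynomial"
begin

text \<open>A graph is a pair (vertex set, edge set); edges are 2-element subsets of the vertex set.\<close>
type_synonym 'v graph = "'v set \<times> 'v set set"

definition verts :: "'v graph \<Rightarrow> 'v set" where "verts G = fst G"
definition edges :: "'v graph \<Rightarrow> 'v set set" where "edges G = snd G"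

definition wf_graph :: "'v graph \<Rightarrow> bool" where
  "wf_graph G \<longleftrightarrow> finite (verts G) \<and> (\<forall>e\<in>edges G. e \<subseteq> verts G \<and> card e = 2)"

definition adj :: "'v graph \<Rightarrow> 'v \<Rightarrow> 'v \<Rightarrow> bool" where
  "adj G u v \<longleftrightarrow> {u, v} \<in> edges G"

fun nbhd :: "'v graph \<Rightarrow> nat \<Rightarrow> 'v set \<Rightarrow> 'v set" where
  "nbhd G 0 S = S \<inter> verts G"
| "nbhd G (Suc t) S = nbhd G t S \<union> {v \<in> verts G. \<exists>u \<in> nbhd G t S. adj G u v}"

definition induced :: "'v graph \<Rightarrow> 'v set \<Rightarrow> 'v graph" where
  "induced G Y = (verts G \<inter> Y, {e \<in> edges G. e \<subseteq> Y})"

definition gunion :: "'v graph \<Rightarrow> 'v graph \<Rightarrow> 'v graph" where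
  "gunion G H = (verts G \<union> verts H, edges G \<union> edges H)"

definition hereditary :: "'v graph set \<Rightarrow> bool" where
  "hereditary C \<longleftrightarrow> (\<forall>G\<in>C. \<forall>v. induced G (verts G - {v}) \<in> C)"

definition closed_disjoint_union :: "'v graph set \<Rightarrow> bool" where
  "closed_disjoint_union C \<longleftrightarrow>
     (\<forall>G\<in>C. \<forall>H\<in>C. verts G \<inter> verts H = {} \<longrightarrow> gunion G H \<in> C)"

definition graph_class :: "'v graph set \<Rightarrow> bool" where
  "graph_class C \<longleftrightarrow> (\<forall>G\<in>C. wf_graph G)"

definition incident_edges :: "'v graph \<Rightarrow> 'v set \<Rightarrow> 'v set set" where
  "incident_edges G B = {e \<in> edges G. e \<inter> B \<noteq> {}}"

definition same_view :: "nat \<Rightarrow> 'v graph \<Rightarrow> ('v \<Rightarrow> 'l) \<Rightarrow> 'v graph \<Rightarrow> ('v \<Rightarrow> 'l) \<Rightarrow> 'v \<Rightarrow> bool" where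
  "same_view r G lab G' lab' v \<longleftrightarrow>
     v \<in> verts G \<and> v \<in> verts G' \<and>
     nbhd G r {v} = nbhd G' r {v} \<and>
     (\<forall>u \<in> nbhd G r {v}. lab u = lab' u) \<and>
     incident_edges G (nbhd G r {v}) = incident_edges G' (nbhd G' r {v})"

text \<open>A deterministic LOCAL algorithm: vertex v (of G with identifier assignment id) is in the
  alg_output iff A G id v. Round complexity r: the alg_output of v depends only on its r-view.\<close>
definition local_alg :: "nat \<Rightarrow> ('v graph \<Rightarrow> ('v \<Rightarrow> nat) \<Rightarrow> 'v \<Rightarrow> bool) \<Rightarrow> bool" where
  "local_alg r A \<longleftrightarrow>
     (\<forall>G G' idf idf' v. wf_graph G \<longrightarrow> wf_graph G' \<longrightarrow> same_view r G idf G' idf' v \<longrightarrow>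
        (A G idf v \<longleftrightarrow> A G' idf' v))"

definition alg_output :: "('v graph \<Rightarrow> ('v \<Rightarrow> nat) \<Rightarrow> 'v \<Rightarrow> bool) \<Rightarrow> 'v graph \<Rightarrow> ('v \<Rightarrow> nat) \<Rightarrow> 'v set" where
  "alg_output A G idf = {v \<in> verts G. A G idf v}"

definition valid_ids :: "real poly \<Rightarrow> 'v graph \<Rightarrow> ('v \<Rightarrow> nat) \<Rightarrow> bool" where
  "valid_ids p G idf \<longleftrightarrow> inj_on idf (verts G) \<and>
     (\<forall>v \<in> verts G. 0 < idf v \<and> real (idf v) \<le> poly p (real (card (verts G))))"

text \<open>Verifier: ver G S v says whether the verifier accepts at v for candidate solution S.
  Its round complexity is rho: the decision depends only on the rho-view labelled by
  membership in S.\<close>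
definition local_verifier :: "nat \<Rightarrow> ('v graph \<Rightarrow> 'v set \<Rightarrow> 'v \<Rightarrow> bool) \<Rightarrow> bool" where
  "local_verifier \<rho> ver \<longleftrightarrow>
     (\<forall>G G' S S' v. wf_graph G \<longrightarrow> wf_graph G' \<longrightarrow>
        same_view \<rho> G (\<lambda>u. u \<in> S) G' (\<lambda>u. u \<in> S') v \<longrightarrow> (ver G S v \<longleftrightarrow> ver G' S' v))"

text \<open>Pi (given by its feasibility predicate feas) is rho-local, witnessed by verifier ver.\<close>
definition rho_local :: "nat \<Rightarrow> ('v graph \<Rightarrow> 'v set \<Rightarrow> bool) \<Rightarrow> ('v graph \<Rightarrow> 'v set \<Rightarrow> 'v \<Rightarrow> bool) \<Rightarrow> bool" where
  "rho_local \<rho> feas ver \<longleftrightarrow> local_verifier \<rho> ver \<and>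
     (\<forall>G S. wf_graph G \<longrightarrow> S \<subseteq> verts G \<longrightarrow> (feas G S \<longleftrightarrow> (\<forall>v \<in> verts G. ver G S v)))"

definition feasible_on :: "('v graph \<Rightarrow> 'v set \<Rightarrow> 'v \<Rightarrow> bool) \<Rightarrow> 'v graph \<Rightarrow> 'v set \<Rightarrow> 'v set \<Rightarrow> bool" where
  "feasible_on ver G S X \<longleftrightarrow> (\<forall>x \<in> X. ver G S x)"

definition OPT_on :: "('v graph \<Rightarrow> 'v set \<Rightarrow> 'v \<Rightarrow> bool) \<Rightarrow> 'v graph \<Rightarrow> 'v set \<Rightarrow> nat" where
  "OPT_on ver G X = Inf (card ` {S. S \<subseteq> verts G \<and> feasible_on ver G S X})"

definition OPT :: "('v graph \<Rightarrow> 'v set \<Rightarrow> 'v \<Rightarrow> bool) \<Rightarrow> 'v graph \<Rightarrow> nat" where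
  "OPT ver G = OPT_on ver G (verts G)"

definition cuttable :: "('v graph \<Rightarrow> 'v set \<Rightarrow> 'v \<Rightarrow> bool) \<Rightarrow> 'v graph set \<Rightarrow> real \<Rightarrow> bool" where
  "cuttable ver C \<beta> \<longleftrightarrow>
     (\<forall>G \<in> C. \<forall>X. X \<subseteq> verts G \<longrightarrow>
        (\<exists>Y. X \<subseteq> Y \<and> Y \<subseteq> verts G \<and>
             real (OPT ver (induced G Y)) \<le> \<beta> * real (OPT_on ver G X)))"

definition approximation ::
  "('v graph \<Rightarrow> 'v set \<Rightarrow> bool) \<Rightarrow> ('v graph \<Rightarrow> 'v set \<Rightarrow> 'v \<Rightarrow> bool) \<Rightarrow> 'v graph set \<Rightarrow> real
     \<Rightarrow> ('v graph \<Rightarrow> ('v \<Rightarrow> nat) \<Rightarrow> 'v \<Rightarrow> bool) \<Rightarrow> bool" where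
  "approximation feas ver C \<alpha> A \<longleftrightarrow>
     (\<forall>p G idf. G \<in> C \<longrightarrow> valid_ids p G idf \<longrightarrow>
        feas G (alg_output A G idf) \<and> real (card (alg_output A G idf)) \<le> \<alpha> * real (OPT ver G))"

definition weakly_uniform_approximation ::
  "('v graph \<Rightarrow> 'v set \<Rightarrow> bool) \<Rightarrow> ('v graph \<Rightarrow> 'v set \<Rightarrow> 'v \<Rightarrow> bool) \<Rightarrow> 'v graph set \<Rightarrow> real \<Rightarrow> nat \<Rightarrow> real
     \<Rightarrow> ('v graph \<Rightarrow> ('v \<Rightarrow> nat) \<Rightarrow> 'v \<Rightarrow> bool) \<Rightarrow> bool" where
  "weakly_uniform_approximation feas ver C \<epsilon> k \<gamma> A \<longleftrightarrow>
     (\<forall>p G idf. G \<in> C \<longrightarrow> valid_ids p G idf \<longrightarrow>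
        feas G (alg_output A G idf) \<and>
        (\<forall>S. S \<subseteq> verts G \<longrightarrow> real (card S) \<ge> of_int \<lfloor>\<epsilon> * real (card (verts G))\<rfloor> \<longrightarrow>
           real (card (alg_output A G idf \<inter> S)) \<le> \<gamma> * real (OPT_on ver G (nbhd G k S))))"

end

theory Submission
  imports Defs
begin

lemma nbhd_sub_verts: "nbhd G t S \<subseteq> verts G"
  by (induction t) auto

lemma nbhd_mono_t: "nbhd G t S \<subseteq> nbhd G (Suc t) S"
  by auto

lemma nbhd_mono_le: "s \<le> t \<Longrightarrow> nbhd G s S \<subseteq> nbhd G t S"
  using lift_Suc_mono_le[of "\<lambda>t. nbhd G t S", OF nbhd_mono_t] by blast

lemma nbhd_mono_S: "S \<subseteq> T \<Longrightarrow> nbhd G t S \<subseteq> nbhd G t T"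
  by (induction t) auto

lemma nbhd_induced:
  "nbhd G t T \<subseteq> Y \<Longrightarrow> nbhd (induced G Y) t T = nbhd G t T"
proof (induction t)
  case 0
  then show ?case by (auto simp: induced_def verts_def)
next
  case (Suc t)
  have sub: "nbhd G t T \<subseteq> Y" by (rule order_trans[OF nbhd_mono_t Suc.prems])
  have IH: "nbhd (induced G Y) t T = nbhd G t T" using Suc.IH sub by blast
  show ?case
  proof
    show "nbhd (induced G Y) (Suc t) T \<subseteq> nbhd G (Suc t) T"
      using IH by (auto simp: induced_def verts_def edges_def adj_def)
  next
    show "nbhd G (Suc t) T \<subseteq> nbhd (induced G Y) (Suc t) T"
    proof
      fix w assume w: "w \<in> nbhd G (Suc t) T"
      show "w \<in> nbhd (induced G Y) (Suc t) T"
      proof (cases "w \<in> nbhd G t T")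
        case True then show ?thesis using IH by simp
      next
        case False
        then obtain u where u: "u \<in> nbhd G t T" "adj G u w" "w \<in> verts G" using w by auto
        have "w \<in> Y" using w Suc.prems by blast
        moreover have "u \<in> Y" using u sub by blast
        ultimately have "adj (induced G Y) u w" "w \<in> verts (induced G Y)"
          using u by (auto simp: induced_def verts_def edges_def adj_def)
        then show ?thesis using u IH by auto
      qed
    qed
  qed
qed

lemma induced_in_class:
  assumes "hereditary C" "G \<in> C" "finite D" "graph_class C"
  shows "induced G (verts G - D) \<in> C"
  using assms(3)
proof (induction D rule: finite_induct)
  case empty
  have "wf_graph G" using assms(2,4) by (auto simp: graph_class_def)
  then have "induced G (verts G - {}) = G"
    by (cases G) (auto simp: induced_def verts_def edges_def wf_graph_def)
  then show ?case using assms(2) by simp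
next
  case (insert v D)
  let ?H = "induced G (verts G - D)"
  have "induced ?H (verts ?H - {v}) \<in> C" using insert.IH assms(1) unfolding hereditary_def by blast
  moreover have "induced ?H (verts ?H - {v}) = induced G (verts G - insert v D)"
    by (auto simp: induced_def verts_def edges_def)
  ultimately show ?case by simp
qed

theorem mainTheorem11:
  fixes C :: "'v graph set"
    and feas :: "'v graph \<Rightarrow> 'v set \<Rightarrow> bool"
    and ver :: "'v graph \<Rightarrow> 'v set \<Rightarrow> 'v \<Rightarrow> bool"
    and \<rho> :: nat and \<beta> \<epsilon> :: real
  assumes "graph_class C" and "hereditary C" and "closed_disjoint_union C"
    and "rho_local \<rho> feas ver"
    and "cuttable ver C \<beta>" and "\<beta> > 0"
    and "\<epsilon> > 0"
  shows "\<forall>(r::nat) (\<alpha>::real) (A :: 'v graph \<Rightarrow> ('v \<Rightarrow> nat) \<Rightarrow> 'v \<Rightarrow> bool).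
           \<alpha> > 0 \<longrightarrow> local_alg r A \<longrightarrow> approximation feas ver C \<alpha> A \<longrightarrow>
           weakly_uniform_approximation feas ver C \<epsilon> (r + 1) (\<alpha> * \<beta>) A"
proof (intro allI impI)
  fix r :: nat and \<alpha> :: real and A :: "'v graph \<Rightarrow> ('v \<Rightarrow> nat) \<Rightarrow> 'v \<Rightarrow> bool"
  assume apos: "\<alpha> > 0" and loc: "local_alg r A" and appr: "approximation feas ver C \<alpha> A"
  show "weakly_uniform_approximation feas ver C \<epsilon> (r + 1) (\<alpha> * \<beta>) A"
    unfolding weakly_uniform_approximation_def
  proof (intro allI impI conjI)
    fix p G idf
    assume GC: "G \<in> C" and vid: "valid_ids p G idf"
    show "feas G (alg_output A G idf)" using appr GC vid unfolding approximation_def by blast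
    fix S assume SV: "S \<subseteq> verts G"
    have wfG: "wf_graph G" using GC assms(1) by (auto simp: graph_class_def)
    have finG: "finite (verts G)" using wfG by (simp add: wf_graph_def)
    let ?X = "nbhd G (r + 1) S"
    obtain Y where XY: "?X \<subseteq> Y" and YV: "Y \<subseteq> verts G"
      and Yopt: "real (OPT ver (induced G Y)) \<le> \<beta> * real (OPT_on ver G ?X)"
    proof -
      have "\<forall>X. X \<subseteq> verts G \<longrightarrow> (\<exists>Y. X \<subseteq> Y \<and> Y \<subseteq> verts G \<and>
             real (OPT ver (induced G Y)) \<le> \<beta> * real (OPT_on ver G X))"
        using assms(5) GC unfolding cuttable_def by auto
      then have "\<exists>Y. ?X \<subseteq> Y \<and> Y \<subseteq> verts G \<and>
             real (OPT ver (induced G Y)) \<le> \<beta> * real (OPT_on ver G ?X)"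
        using nbhd_sub_verts[of G "r+1" S] by blast
      then show ?thesis using that by blast
    qed
    have "induced G (verts G - (verts G - Y)) \<in> C"
      using induced_in_class[OF assms(2) GC _ assms(1)] finG by blast
    moreover have "verts G - (verts G - Y) = Y" using YV by blast
    ultimately have HC: "induced G Y \<in> C" by simp
    let ?H = "induced G Y"
    have wfH: "wf_graph ?H" using HC assms(1) by (auto simp: graph_class_def)
    define M where "M = real (\<Sum>v\<in>verts G. idf v)"
    have vidH: "valid_ids [:M:] ?H idf"
    proof -
      have "inj_on idf (verts ?H)" using vid
        by (auto simp: valid_ids_def induced_def verts_def intro: inj_on_subset)
      moreover have "\<forall>v\<in>verts ?H. 0 < idf v \<and> real (idf v) \<le> poly [:M:] (real (card (verts ?H)))"
      proof
        fix v assume "v \<in> verts ?H"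
        then have v: "v \<in> verts G" by (auto simp: induced_def verts_def)
        have "idf v \<le> (\<Sum>v\<in>verts G. idf v)" by (rule member_le_sum[OF v _ finG]) simp
        then have "real (idf v) \<le> M" unfolding M_def by (simp only: of_nat_le_iff)
        then show "0 < idf v \<and> real (idf v) \<le> poly [:M:] (real (card (verts ?H)))"
          using vid v by (auto simp: valid_ids_def)
      qed
      ultimately show ?thesis by (simp add: valid_ids_def)
    qed
    have XY': "nbhd G (Suc r) S \<subseteq> Y" using XY by (simp only: Suc_eq_plus1)
    have "nbhd G 0 S = S" using SV by auto
    then have SY: "S \<subseteq> Y" using XY' nbhd_mono_le[of 0 "Suc r" G S] by blast
    have same: "A G idf v \<longleftrightarrow> A ?H idf v" if vS: "v \<in> S" for v
    proof -
      have vG: "v \<in> verts G" using vS SV by blast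
      have vS': "{v} \<subseteq> S" using vS by blast
      have B1: "nbhd G r {v} \<subseteq> Y"
        using nbhd_mono_S[OF vS', of G r] nbhd_mono_t[of G r S] XY' by blast
      have B2: "nbhd G (Suc r) {v} \<subseteq> Y"
        using nbhd_mono_S[OF vS', of G "Suc r"] XY' by blast
      have nb: "nbhd ?H r {v} = nbhd G r {v}"
        using nbhd_induced B1 by blast
      have ie: "incident_edges G (nbhd G r {v}) = incident_edges ?H (nbhd G r {v})"
      proof
        show "incident_edges ?H (nbhd G r {v}) \<subseteq> incident_edges G (nbhd G r {v})"
          by (auto simp: incident_edges_def induced_def edges_def)
      next
        show "incident_edges G (nbhd G r {v}) \<subseteq> incident_edges ?H (nbhd G r {v})"
        proof
          fix e assume e: "e \<in> incident_edges G (nbhd G r {v})"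
          then have eE: "e \<in> edges G" and eB: "e \<inter> nbhd G r {v} \<noteq> {}"
            by (auto simp: incident_edges_def)
          have "e \<subseteq> verts G \<and> card e = 2" using wfG eE by (auto simp: wf_graph_def)
          then obtain a b where ab: "e = {a, b}" "a \<in> verts G" "b \<in> verts G"
            by (auto simp: card_2_iff)
          have "adj G a b" "adj G b a" using eE ab by (auto simp: adj_def insert_commute)
          then have "a \<in> nbhd G (Suc r) {v} \<and> b \<in> nbhd G (Suc r) {v}"
            using eB ab by auto
          then have "e \<subseteq> Y" using B2 ab by auto
          then show "e \<in> incident_edges ?H (nbhd G r {v})"
            using eE eB by (auto simp: incident_edges_def induced_def edges_def)
        qed
      qed
      have "same_view r G idf ?H idf v"
        unfolding same_view_def using vG vS SY nb ie
        by (auto simp: induced_def verts_def)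
      then show ?thesis using loc wfG wfH unfolding local_alg_def by blast
    qed
    have eq: "alg_output A G idf \<inter> S = alg_output A ?H idf \<inter> S"
      using same SV SY by (auto simp: alg_output_def induced_def verts_def)
    have finH: "finite (alg_output A ?H idf)" using wfH by (auto simp: alg_output_def wf_graph_def)
    have "card (alg_output A G idf \<inter> S) \<le> card (alg_output A ?H idf)"
      unfolding eq using finH by (simp add: card_mono)
    also have "real (card (alg_output A ?H idf)) \<le> \<alpha> * real (OPT ver ?H)"
      using appr HC vidH unfolding approximation_def by blast
    also have "\<dots> \<le> \<alpha> * (\<beta> * real (OPT_on ver G ?X))"
      using Yopt apos by simp
    finally show "real (card (alg_output A G idf \<inter> S)) \<le> \<alpha> * \<beta> * real (OPT_on ver G (nbhd G (r + 1) S))"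
      by (simp add: mult.assoc)
  qed
qed

end
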